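(* Let $G$ be a finite simple connected graph of order $n$ with minimum degree $\delta\ge 1$. Then $$\gamma^{0}_{st}(G)\le n-2\left\lceil \frac{2\gamma_t(G)+\delta-2}{2}\right\rceil .$$ Moreover, equality holds for the complete graph $K_n$ for every $n\ge 2$ and for the cycle $C_n$ for every $n\ge 3$.
   Context: For a vertex $v$ of a graph $G=(V,E)$, $N(v)$ is its open neighborhood, and for $f:V\to\mathbb{R}$ and $B\subseteq V$ write $f(B)=\sum_{v\in B}f(v)$; $f(V)$ is the weight of $f$. An inverse signed total dominating function (ISTDF) of $G$ is a function $f:V\to\{-1,1\}$ such that $f(N(v))\le 0$ for every $v\in V$. The inverse signed total domination number $\gamma^{0}_{st}(G)$ is the maximum weight of an ISTDF of $G$. A total dominating set of $G$ is a set $D\subseteq V$ such that every vertex of $V$ has at least one neighbor in $D$; $\gamma_t(G)$ is the minimum cardinality of a total dominating set. *)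

theory Defs
  imports Complex_Main
begin

definition simple_graph :: "'a set \<Rightarrow> ('a \<Rightarrow> 'a \<Rightarrow> bool) \<Rightarrow> bool" where
  "simple_graph V E \<longleftrightarrow> finite V \<and> (\<forall>x y. E x y \<longrightarrow> x \<in> V \<and> y \<in> V)
     \<and> (\<forall>x y. E x y \<longrightarrow> E y x) \<and> (\<forall>x. \<not> E x x)"

definition graph_connected :: "'a set \<Rightarrow> ('a \<Rightarrow> 'a \<Rightarrow> bool) \<Rightarrow> bool" where
  "graph_connected V E \<longleftrightarrow> (\<forall>u\<in>V. \<forall>v\<in>V. E\<^sup>*\<^sup>* u v)"

definition nbhd :: "'a set \<Rightarrow> ('a \<Rightarrow> 'a \<Rightarrow> bool) \<Rightarrow> 'a \<Rightarrow> 'a set" where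
  "nbhd V E v = {u \<in> V. E v u}"

definition min_degree :: "'a set \<Rightarrow> ('a \<Rightarrow> 'a \<Rightarrow> bool) \<Rightarrow> nat" where
  "min_degree V E = Min ((\<lambda>v. card (nbhd V E v)) ` V)"

definition is_ISTDF :: "'a set \<Rightarrow> ('a \<Rightarrow> 'a \<Rightarrow> bool) \<Rightarrow> ('a \<Rightarrow> int) \<Rightarrow> bool" where
  "is_ISTDF V E f \<longleftrightarrow> (\<forall>v\<in>V. f v \<in> {-1, 1}) \<and> (\<forall>v\<in>V. sum f (nbhd V E v) \<le> 0)"

definition inv_signed_total_dom_number :: "'a set \<Rightarrow> ('a \<Rightarrow> 'a \<Rightarrow> bool) \<Rightarrow> int" where
  "inv_signed_total_dom_number V E = Max {sum f V | f. is_ISTDF V E f}"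

definition is_total_dom_set :: "'a set \<Rightarrow> ('a \<Rightarrow> 'a \<Rightarrow> bool) \<Rightarrow> 'a set \<Rightarrow> bool" where
  "is_total_dom_set V E D \<longleftrightarrow> D \<subseteq> V \<and> (\<forall>v\<in>V. \<exists>u\<in>D. E v u)"

definition total_dom_number :: "'a set \<Rightarrow> ('a \<Rightarrow> 'a \<Rightarrow> bool) \<Rightarrow> nat" where
  "total_dom_number V E = Min {card D | D. is_total_dom_set V E D}"

definition complete_adj :: "nat \<Rightarrow> nat \<Rightarrow> nat \<Rightarrow> bool" where
  "complete_adj n i j \<longleftrightarrow> i < n \<and> j < n \<and> i \<noteq> j"

definition cycle_adj :: "nat \<Rightarrow> nat \<Rightarrow> nat \<Rightarrow> bool" where
  "cycle_adj n i j \<longleftrightarrow> i < n \<and> j < n \<and> (j = (i + 1) mod n \<or> i = (j + 1) mod n)"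

end

theory Submission
  imports Defs
begin

definition negs :: "'a set \<Rightarrow> ('a \<Rightarrow> int) \<Rightarrow> 'a set" where
  "negs V f = {x\<in>V. f x = -1}"

lemma sum_pm:
  assumes "finite S" "\<forall>x\<in>S. f x \<in> {-1,1::int}"
  shows "sum f S = int (card S) - 2 * int (card {x\<in>S. f x = -1})"
proof -
  have "sum f S = (\<Sum>x\<in>S. 1 - 2 * (if f x = -1 then 1 else 0))"
    by (rule sum.cong) (use assms in auto)
  also have "\<dots> = int (card S) - 2 * (\<Sum>x\<in>S. if f x = -1 then 1 else (0::int))"
    by (simp add: sum_subtractf sum_distrib_left)
  also have "(\<Sum>x\<in>S. if f x = -1 then 1 else (0::int)) = int (card {x\<in>S. f x = -1})"
    using assms(1) by (simp add: sum.If_cases Int_def conj_commute)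
  finally show ?thesis .
qed

lemma nbhd_sub: "nbhd V E v \<subseteq> V" by (auto simp: nbhd_def)

lemma ISTDF_iff:
  assumes "finite V"
  shows "is_ISTDF V E f \<longleftrightarrow> (\<forall>v\<in>V. f v \<in> {-1,1}) \<and>
     (\<forall>v\<in>V. card (nbhd V E v) \<le> 2 * card (nbhd V E v \<inter> negs V f))"
proof -
  have fin: "finite (nbhd V E v)" for v using assms nbhd_sub finite_subset by metis
  have eq: "{x\<in>nbhd V E v. f x = -1} = nbhd V E v \<inter> negs V f" for v
    using nbhd_sub[of V E v] by (auto simp: negs_def)
  show ?thesis
  proof
    assume h: "is_ISTDF V E f"
    then have pm: "\<forall>v\<in>V. f v \<in> {-1,1}" by (simp add: is_ISTDF_def)
    moreover have "card (nbhd V E v) \<le> 2 * card (nbhd V E v \<inter> negs V f)" if "v\<in>V" for v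
    proof -
      have "sum f (nbhd V E v) \<le> 0" using h that by (simp add: is_ISTDF_def)
      moreover have "sum f (nbhd V E v) = int (card (nbhd V E v)) - 2 * int (card (nbhd V E v \<inter> negs V f))"
        using sum_pm[OF fin, of v f] pm nbhd_sub eq by (metis subsetD)
      ultimately show ?thesis by linarith
    qed
    ultimately show "(\<forall>v\<in>V. f v \<in> {-1,1}) \<and> (\<forall>v\<in>V. card (nbhd V E v) \<le> 2 * card (nbhd V E v \<inter> negs V f))" by blast
  next
    assume h: "(\<forall>v\<in>V. f v \<in> {-1,1}) \<and> (\<forall>v\<in>V. card (nbhd V E v) \<le> 2 * card (nbhd V E v \<inter> negs V f))"
    have "sum f (nbhd V E v) \<le> 0" if "v\<in>V" for v
    proof -
      have "sum f (nbhd V E v) = int (card (nbhd V E v)) - 2 * int (card (nbhd V E v \<inter> negs V f))"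
        using sum_pm[OF fin, of v f] h nbhd_sub eq by (metis subsetD)
      with h that show ?thesis by force
    qed
    with h show "is_ISTDF V E f" by (simp add: is_ISTDF_def)
  qed
qed

lemma weight:
  assumes "finite V" "is_ISTDF V E f"
  shows "sum f V = int (card V) - 2 * int (card (negs V f))"
  using sum_pm[OF assms(1), of f] assms(2) by (simp add: is_ISTDF_def negs_def)

lemma ISTDF_set:
  assumes "finite V"
  shows "finite {sum f V | f. is_ISTDF V E f} \<and> {sum f V | f. is_ISTDF V E f} \<noteq> {}"
proof
  have "{sum f V | f. is_ISTDF V E f} \<subseteq> {-int (card V)..int (card V)}"
  proof
    fix x assume "x \<in> {sum f V | f. is_ISTDF V E f}"
    then obtain f where f: "is_ISTDF V E f" "x = sum f V" by blast
    have "card (negs V f) \<le> card V" using assms by (intro card_mono) (auto simp: negs_def)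
    then show "x \<in> {-int (card V)..int (card V)}" using weight[OF assms f(1)] f(2) by simp
  qed
  then show "finite {sum f V | f. is_ISTDF V E f}" using finite_subset by blast
  have "is_ISTDF V E (\<lambda>_. -1)" by (simp add: is_ISTDF_def)
  then show "{sum f V | f. is_ISTDF V E f} \<noteq> {}" by blast
qed

lemma inv_le:
  assumes "finite V" "\<And>f. is_ISTDF V E f \<Longrightarrow> sum f V \<le> B"
  shows "inv_signed_total_dom_number V E \<le> B"
  unfolding inv_signed_total_dom_number_def using ISTDF_set[OF assms(1), of E] assms(2)
  by (subst Max_le_iff) auto

lemma inv_ge:
  assumes "finite V" "is_ISTDF V E f"
  shows "sum f V \<le> inv_signed_total_dom_number V E"
  unfolding inv_signed_total_dom_number_def using ISTDF_set[OF assms(1), of E] assms(2)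
  by (intro Max_ge) auto

lemma tds_set_fin:
  assumes "finite V"
  shows "finite {card D | D. is_total_dom_set V E D}"
proof -
  have "{card D | D. is_total_dom_set V E D} \<subseteq> {..card V}"
    using assms by (auto simp: is_total_dom_set_def intro: card_mono)
  then show ?thesis using finite_subset by blast
qed

lemma tdn_le:
  assumes "finite V" "is_total_dom_set V E D"
  shows "total_dom_number V E \<le> card D"
  unfolding total_dom_number_def using tds_set_fin[OF assms(1), of E] assms(2)
  by (intro Min_le) auto

lemma tdn_ex:
  assumes "finite V" "is_total_dom_set V E D"
  shows "\<exists>D'. is_total_dom_set V E D' \<and> card D' = total_dom_number V E"
proof -
  have "total_dom_number V E \<in> {card D | D. is_total_dom_set V E D}"
    unfolding total_dom_number_def using tds_set_fin[OF assms(1), of E] assms(2)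
    by (intro Min_in) auto
  then show ?thesis by auto
qed

lemma ceil_half: "\<lceil>real (d::nat) / 2\<rceil> = int ((d + 1) div 2)"
proof (cases "even d")
  case True then obtain m where "d = 2*m" by auto
  then show ?thesis by simp
next
  case False then obtain m where m: "d = 2*m+1" using oddE by blast
  have "real d / 2 = real m + 1/2" using m by simp
  then have "\<lceil>real d / 2\<rceil> = int m + 1" by (simp add: ceiling_eq_iff)
  then show ?thesis using m by simp
qed

lemma ceil_expr: "\<lceil>(2 * real (g::nat) + real (d::nat) - 2) / 2\<rceil> = int g - 1 + int ((d + 1) div 2)"
proof -
  have "(2 * real g + real d - 2) / 2 = real d / 2 + real_of_int (int g - 1)" by simp
  then show ?thesis by (simp only: ceiling_add_of_int ceil_half)
qed

lemma part1:
  assumes sg: "simple_graph V E" and ne: "V \<noteq> {}" and md: "min_degree V E \<ge> 1"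
  shows "inv_signed_total_dom_number V E
              \<le> int (card V) - 2 * \<lceil>(2 * real (total_dom_number V E) + real (min_degree V E) - 2) / 2\<rceil>"
proof -
  have fin: "finite V" using sg by (simp add: simple_graph_def)
  define d where "d = min_degree V E"
  define k where "k = (d + 1) div 2"
  have k1: "k \<ge> 1" using md by (simp add: k_def d_def)
  have deg: "d \<le> card (nbhd V E v)" if "v \<in> V" for v
    unfolding d_def min_degree_def using fin that by (intro Min_le) auto
  have "inv_signed_total_dom_number V E \<le> int (card V) - 2 * (int (total_dom_number V E) - 1 + int k)"
  proof (rule inv_le[OF fin])
    fix f assume f: "is_ISTDF V E f"
    define M where "M = negs V f"
    have finM: "finite M" using fin by (simp add: M_def negs_def)
    have nb: "k \<le> card (nbhd V E v \<inter> M)" if "v \<in> V" for v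
    proof -
      have "card (nbhd V E v) \<le> 2 * card (nbhd V E v \<inter> M)"
        using f that ISTDF_iff[OF fin] by (simp add: M_def)
      with deg[OF that] show ?thesis unfolding k_def by linarith
    qed
    obtain v0 where v0: "v0 \<in> V" using ne by blast
    have "k \<le> card M" using nb[OF v0] card_mono[OF finM, of "nbhd V E v0 \<inter> M"] Int_lower2 le_trans by metis
    then have "k - 1 \<le> card M" by simp
    then obtain R where R: "R \<subseteq> M" "card R = k - 1"
      using obtain_subset_with_card_n[of "k - 1" M] by metis
    have finR: "finite R" using R(1) finM finite_subset by blast
    have tds: "is_total_dom_set V E (M - R)"
      unfolding is_total_dom_set_def
    proof
      show "M - R \<subseteq> V" by (auto simp: M_def negs_def)
      show "\<forall>v\<in>V. \<exists>u\<in>M - R. E v u"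
      proof
        fix v assume v: "v \<in> V"
        have "card (nbhd V E v \<inter> M) - card R \<le> card ((nbhd V E v \<inter> M) - R)"
          using diff_card_le_card_Diff[OF finR] by blast
        with nb[OF v] R(2) k1 have "card ((nbhd V E v \<inter> M) - R) \<ge> 1" by linarith
        then have "(nbhd V E v \<inter> M) - R \<noteq> {}" by (metis card.empty not_one_le_zero)
        then obtain u where "u \<in> (nbhd V E v \<inter> M) - R" by blast
        then show "\<exists>u\<in>M - R. E v u" by (auto simp: nbhd_def)
      qed
    qed
    have "total_dom_number V E \<le> card (M - R)" by (rule tdn_le[OF fin tds])
    also have "card (M - R) = card M - (k - 1)" using card_Diff_subset[OF finR R(1)] R(2) by simp
    finally have g: "total_dom_number V E + (k - 1) \<le> card M" using \<open>k \<le> card M\<close> k1 by linarith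
    have "sum f V = int (card V) - 2 * int (card M)" using weight[OF fin f] by (simp add: M_def)
    then show "sum f V \<le> int (card V) - 2 * (int (total_dom_number V E) - 1 + int k)"
    proof -
      have "int (total_dom_number V E + (k - 1)) \<le> int (card M)" using g by linarith
      moreover have "int (total_dom_number V E + (k - 1)) = int (total_dom_number V E) + int k - 1"
        using k1 by (simp add: of_nat_diff)
      ultimately have h: "int (total_dom_number V E) + int k - 1 \<le> int (card M)" by simp
      show ?thesis unfolding \<open>sum f V = int (card V) - 2 * int (card M)\<close> using h by simp
    qed
  qed
  then show ?thesis by (simp add: ceil_expr k_def d_def)
qed

lemma K_nbhd: "v < n \<Longrightarrow> nbhd {0..<n} (complete_adj n) v = {0..<n} - {v}"
  by (auto simp: nbhd_def complete_adj_def)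

lemma K_mindeg: assumes "n \<ge> 2" shows "min_degree {0..<n} (complete_adj n) = n - 1"
proof -
  have c: "card (nbhd {0..<n} (complete_adj n) v) = n - 1" if "v < n" for v
    using that by (simp add: K_nbhd)
  show ?thesis unfolding min_degree_def
  proof (rule Min_eqI)
    show "finite ((\<lambda>v. card (nbhd {0..<n} (complete_adj n) v)) ` {0..<n})" by simp
    show "\<And>y. y \<in> (\<lambda>v. card (nbhd {0..<n} (complete_adj n) v)) ` {0..<n} \<Longrightarrow> n - 1 \<le> y"
      using c by auto
    show "n - 1 \<in> (\<lambda>v. card (nbhd {0..<n} (complete_adj n) v)) ` {0..<n}"
      using c[of 0] assms by (intro image_eqI[of _ _ 0]) auto
  qed
qed

lemma K_tdn: assumes "n \<ge> 2" shows "total_dom_number {0..<n} (complete_adj n) = 2"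
proof -
  have t01: "is_total_dom_set {0..<n} (complete_adj n) {0,1}"
    using assms by (auto simp: is_total_dom_set_def complete_adj_def)
  have ge: "2 \<le> card D" if D: "is_total_dom_set {0..<n} (complete_adj n) D" for D
  proof -
    have fD: "finite D" using D finite_subset by (auto simp: is_total_dom_set_def)
    have "(0::nat) \<in> {0..<n}" using assms by simp
    then obtain u where u: "u \<in> D" "complete_adj n 0 u" using D unfolding is_total_dom_set_def by blast
    then have "u < n" by (simp add: complete_adj_def)
    then have "u \<in> {0..<n}" by simp
    then obtain w where w: "w \<in> D" "complete_adj n u w" using D unfolding is_total_dom_set_def by blast
    then have "u \<noteq> w" by (simp add: complete_adj_def)
    then have "card {u, w} = 2" by simp
    moreover have "card {u,w} \<le> card D" using u w fD by (intro card_mono) auto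
    ultimately show ?thesis by simp
  qed
  show ?thesis unfolding total_dom_number_def
    using tds_set_fin[of "{0..<n}" "complete_adj n"] t01 ge
    by (intro Min_eqI) force+
qed

lemma part2:
  assumes n2: "(n::nat) \<ge> 2"
  shows "inv_signed_total_dom_number {0..<n} (complete_adj n)
              = int n - 2 * \<lceil>(2 * real (total_dom_number {0..<n} (complete_adj n))
                                + real (min_degree {0..<n} (complete_adj n)) - 2) / 2\<rceil>"
proof -
  define m where "m = n div 2 + 1"
  have rhs: "\<lceil>(2 * real (total_dom_number {0..<n} (complete_adj n))
                                + real (min_degree {0..<n} (complete_adj n)) - 2) / 2\<rceil> = int m"
    unfolding K_tdn[OF n2] K_mindeg[OF n2] ceil_expr using n2 by (simp add: m_def)
  let ?V = "{0..<n::nat}"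
  have fin: "finite ?V" by simp
  have up: "inv_signed_total_dom_number ?V (complete_adj n) \<le> int n - 2 * int m"
  proof (rule inv_le[OF fin])
    fix f assume f: "is_ISTDF ?V (complete_adj n) f"
    define M where "M = negs ?V f"
    have finM: "finite M" by (simp add: M_def negs_def)
    have nb: "n - 1 \<le> 2 * card ((?V - {v}) \<inter> M)" if "v < n" for v
    proof -
      have "card (nbhd ?V (complete_adj n) v) \<le> 2 * card (nbhd ?V (complete_adj n) v \<inter> M)"
        using f that ISTDF_iff[OF fin, of "complete_adj n" f] by (simp add: M_def)
      then show ?thesis unfolding K_nbhd[OF that] using that by simp
    qed
    have "1 \<le> card ((?V - {0}) \<inter> M)" using nb[of 0] n2 by simp
    then obtain u where u: "u \<in> M" by (metis Int_iff card.empty equals0I not_one_le_zero)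
    then have un: "u < n" by (simp add: M_def negs_def)
    have "(?V - {u}) \<inter> M = M - {u}" by (auto simp: M_def negs_def)
    then have "n - 1 \<le> 2 * (card M - 1)" using nb[OF un] u finM by simp
    then have cM: "m \<le> card M" using n2 unfolding m_def by linarith
    show "sum f ?V \<le> int n - 2 * int m"
      using weight[OF fin f] cM by (simp add: M_def)
  qed
  define f where "f = (\<lambda>v::nat. if v < m then -1 else (1::int))"
  have mn: "m \<le> n" using n2 unfolding m_def by linarith
  have negs: "negs ?V f = {0..<m}" using mn by (auto simp: negs_def f_def)
  have fI: "is_ISTDF ?V (complete_adj n) f"
    unfolding ISTDF_iff[OF fin] negs
  proof (intro conjI ballI)
    fix v assume v: "v \<in> ?V"
    show "f v \<in> {-1,1}" by (simp add: f_def)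
    have "(?V - {v}) \<inter> {0..<m} = {0..<m} - {v}" using mn by auto
    moreover have "card ({0..<m} - {v}) \<ge> m - 1"
      using diff_card_le_card_Diff[of "{v}" "{0..<m}"] by simp
    ultimately have "m - 1 \<le> card ((?V - {v}) \<inter> {0..<m})" by simp
    then show "card (nbhd ?V (complete_adj n) v) \<le> 2 * card (nbhd ?V (complete_adj n) v \<inter> {0..<m})"
      using v K_nbhd[of v n] unfolding m_def by auto
  qed
  have "sum f ?V = int n - 2 * int m" using weight[OF fin fI] negs by simp
  then have lo: "int n - 2 * int m \<le> inv_signed_total_dom_number ?V (complete_adj n)"
    using inv_ge[OF fin fI] by simp
  show ?thesis unfolding rhs using up lo by linarith
qed

lemma succ_mod: "(i::nat) < n \<Longrightarrow> (i + 1) mod n = (if i = n - 1 then 0 else i + 1)"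
  by auto

lemma pred_iff: "(i::nat) < n \<Longrightarrow> j < n \<Longrightarrow> (i = (j + 1) mod n) \<longleftrightarrow> j = (if i = 0 then n - 1 else i - 1)"
  by (cases "j = n - 1") auto

lemma C_nbhd:
  assumes "n \<ge> 3" "i < n"
  shows "nbhd {0..<n} (cycle_adj n) i = {if i = n - 1 then 0 else i + 1, if i = 0 then n - 1 else i - 1}"
proof (rule set_eqI)
  fix x
  have nx: "(if i = n - 1 then 0 else i + 1) < n" "(if i = 0 then n - 1 else i - 1) < n" using assms by auto
  have "x \<in> nbhd {0..<n} (cycle_adj n) i \<longleftrightarrow> x < n \<and> (x = (i+1) mod n \<or> i = (x+1) mod n)"
    using assms by (auto simp: nbhd_def cycle_adj_def)
  also have "\<dots> \<longleftrightarrow> x < n \<and> (x = (if i = n - 1 then 0 else i + 1) \<or> x = (if i = 0 then n - 1 else i - 1))"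
    using succ_mod[OF assms(2)] pred_iff[OF assms(2), of x] by metis
  also have "\<dots> \<longleftrightarrow> x \<in> {if i = n - 1 then 0 else i + 1, if i = 0 then n - 1 else i - 1}"
    using nx by auto
  finally show "x \<in> nbhd {0..<n} (cycle_adj n) i \<longleftrightarrow> x \<in> {if i = n - 1 then 0 else i + 1, if i = 0 then n - 1 else i - 1}" .
qed

lemma C_card:
  assumes "n \<ge> 3" "i < n"
  shows "card (nbhd {0..<n} (cycle_adj n) i) = 2"
  unfolding C_nbhd[OF assms] using assms by (auto split: if_splits)

lemma C_mindeg: assumes "n \<ge> 3" shows "min_degree {0..<n} (cycle_adj n) = 2"
  unfolding min_degree_def
proof (rule Min_eqI)
  show "finite ((\<lambda>v. card (nbhd {0..<n} (cycle_adj n) v)) ` {0..<n})" by simp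
  show "\<And>y. y \<in> (\<lambda>v. card (nbhd {0..<n} (cycle_adj n) v)) ` {0..<n} \<Longrightarrow> 2 \<le> y"
    using C_card[OF assms] by auto
  show "2 \<in> (\<lambda>v. card (nbhd {0..<n} (cycle_adj n) v)) ` {0..<n}"
    using C_card[OF assms, of 0] assms by (intro image_eqI[of _ _ 0]) auto
qed

lemma C_ISTDF:
  assumes n3: "n \<ge> 3"
  shows "is_ISTDF {0..<n} (cycle_adj n) f \<longleftrightarrow> (\<forall>v\<in>{0..<n}. f v \<in> {-1,1}) \<and>
     (\<forall>v\<in>{0..<n}. nbhd {0..<n} (cycle_adj n) v \<inter> negs {0..<n} f \<noteq> {})"
proof -
  have "card (nbhd {0..<n} (cycle_adj n) v) \<le> 2 * card (nbhd {0..<n} (cycle_adj n) v \<inter> negs {0..<n} f)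
     \<longleftrightarrow> nbhd {0..<n} (cycle_adj n) v \<inter> negs {0..<n} f \<noteq> {}" if "v \<in> {0..<n}" for v
  proof -
    have "finite (nbhd {0..<n} (cycle_adj n) v \<inter> negs {0..<n} f)" by (simp add: negs_def)
    then have "1 \<le> card (nbhd {0..<n} (cycle_adj n) v \<inter> negs {0..<n} f) \<longleftrightarrow> nbhd {0..<n} (cycle_adj n) v \<inter> negs {0..<n} f \<noteq> {}"
      by (simp add: Suc_le_eq card_gt_0_iff)
    then show ?thesis using C_card[OF n3, of v] that by simp
  qed
  then show ?thesis using ISTDF_iff[of "{0..<n}" "cycle_adj n" f] by simp
qed

lemma part3:
  assumes n3: "(n::nat) \<ge> 3"
  shows "inv_signed_total_dom_number {0..<n} (cycle_adj n)
              = int n - 2 * \<lceil>(2 * real (total_dom_number {0..<n} (cycle_adj n))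
                                + real (min_degree {0..<n} (cycle_adj n)) - 2) / 2\<rceil>"
proof -
  let ?V = "{0..<n::nat}" and ?E = "cycle_adj n"
  let ?g = "total_dom_number ?V ?E"
  have fin: "finite ?V" by simp
  have rhs: "\<lceil>(2 * real ?g + real (min_degree ?V ?E) - 2) / 2\<rceil> = int ?g"
    unfolding C_mindeg[OF n3] ceil_expr by simp
  have up: "inv_signed_total_dom_number ?V ?E \<le> int n - 2 * int ?g"
  proof (rule inv_le[OF fin])
    fix f assume f: "is_ISTDF ?V ?E f"
    have "is_total_dom_set ?V ?E (negs ?V f)"
      unfolding is_total_dom_set_def
    proof
      show "negs ?V f \<subseteq> ?V" by (auto simp: negs_def)
      show "\<forall>v\<in>?V. \<exists>u\<in>negs ?V f. ?E v u"
      proof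
        fix v assume "v \<in> ?V"
        then have "nbhd ?V ?E v \<inter> negs ?V f \<noteq> {}" using f C_ISTDF[OF n3] by blast
        then show "\<exists>u\<in>negs ?V f. ?E v u" by (auto simp: nbhd_def)
      qed
    qed
    then have "?g \<le> card (negs ?V f)" by (rule tdn_le[OF fin])
    then show "sum f ?V \<le> int n - 2 * int ?g" using weight[OF fin f] by simp
  qed
  have "is_total_dom_set ?V ?E ?V"
    unfolding is_total_dom_set_def
  proof (intro conjI ballI)
    fix v assume v: "v \<in> ?V"
    then have "nbhd ?V ?E v \<noteq> {}" using C_card[OF n3, of v] by (metis atLeastLessThan_iff card.empty zero_neq_numeral)
    then show "\<exists>u\<in>?V. ?E v u" by (auto simp: nbhd_def)
  qed simp
  then obtain D where D: "is_total_dom_set ?V ?E D" "card D = ?g" using tdn_ex[OF fin] by blast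
  define f where "f = (\<lambda>v. if v \<in> D then -1 else (1::int))"
  have negs: "negs ?V f = D" using D(1) by (auto simp: negs_def f_def is_total_dom_set_def)
  have fI: "is_ISTDF ?V ?E f"
    unfolding C_ISTDF[OF n3] negs
  proof (intro conjI ballI)
    fix v assume v: "v \<in> ?V"
    show "f v \<in> {-1,1}" by (simp add: f_def)
    obtain u where "u \<in> D" "?E v u" using D(1) v unfolding is_total_dom_set_def by blast
    then show "nbhd ?V ?E v \<inter> D \<noteq> {}" by (auto simp: nbhd_def cycle_adj_def)
  qed
  have "sum f ?V = int n - 2 * int ?g" using weight[OF fin fI] negs D(2) by simp
  then have lo: "int n - 2 * int ?g \<le> inv_signed_total_dom_number ?V ?E"
    using inv_ge[OF fin fI] by simp
  show ?thesis unfolding rhs using up lo by linarith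
qed


theorem mainTheorem2:
  shows "(\<forall>(V :: 'a set) E. simple_graph V E \<and> graph_connected V E \<and> V \<noteq> {} \<and> min_degree V E \<ge> 1 \<longrightarrow>
            inv_signed_total_dom_number V E
              \<le> int (card V) - 2 * \<lceil>(2 * real (total_dom_number V E) + real (min_degree V E) - 2) / 2\<rceil>)
    \<and> (\<forall>n::nat. n \<ge> 2 \<longrightarrow>
            inv_signed_total_dom_number {0..<n} (complete_adj n)
              = int n - 2 * \<lceil>(2 * real (total_dom_number {0..<n} (complete_adj n))
                                + real (min_degree {0..<n} (complete_adj n)) - 2) / 2\<rceil>)
    \<and> (\<forall>n::nat. n \<ge> 3 \<longrightarrow>
            inv_signed_total_dom_number {0..<n} (cycle_adj n)
              = int n - 2 * \<lceil>(2 * real (total_dom_number {0..<n} (cycle_adj n))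
                                + real (min_degree {0..<n} (cycle_adj n)) - 2) / 2\<rceil>)"
  using part1 part2 part3 by blast

end
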